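(* Let $m\ge1$, $n\ge0$ and let $\mu$ be a partition with $\ell(\mu)=n+1$ and $\mu_1<m$. Let $\mu^c$ be the complement of $\mu$ in the rectangle $(m^{n+1})$, i.e. $\mu^c_i=m-\mu_{n+2-i}$ for $1\le i\le n+1$. Then $$f_\mu(q,t)-f_{\mu^c}(q,t)=\frac{1}{1-q}\sum_{j=0}^{n}t^j\big(q^{\mu^c_{n+1-j}}-q^{\mu_{n+1-j}}\big).$$
   Context: For a partition $\nu$, $f_\nu(q,t)=\sum_{x\in\nu}q^{a(x)}t^{l(x)}$, where for a box $x=(r,c)$ of $\nu$ the arm is $a(x)=\nu_r-c$ and the leg is $l(x)=\nu'_c-r$. *)

theory Defs
  imports Main
begin

text \<open>Partitions are represented as lists of positive naturals in weakly
decreasing order; part \<nu> i is the 1-based i-th part (0 beyond the length).\<close>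

definition is_partition :: "nat list \<Rightarrow> bool" where
  "is_partition \<nu> \<longleftrightarrow> sorted_wrt (\<ge>) \<nu> \<and> (\<forall>x\<in>set \<nu>. 0 < x)"

definition part :: "nat list \<Rightarrow> nat \<Rightarrow> nat" where
  "part \<nu> i = (if 1 \<le> i \<and> i \<le> length \<nu> then \<nu> ! (i - 1) else 0)"

definition conj_part :: "nat list \<Rightarrow> nat \<Rightarrow> nat" where
  "conj_part \<nu> c = card {r. 1 \<le> r \<and> r \<le> length \<nu> \<and> c \<le> part \<nu> r}"

definition boxes :: "nat list \<Rightarrow> (nat \<times> nat) set" where
  "boxes \<nu> = {(r, c). 1 \<le> r \<and> r \<le> length \<nu> \<and> 1 \<le> c \<and> c \<le> part \<nu> r}"

definition arm :: "nat list \<Rightarrow> nat \<times> nat \<Rightarrow> nat" where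
  "arm \<nu> x = part \<nu> (fst x) - snd x"

definition leg :: "nat list \<Rightarrow> nat \<times> nat \<Rightarrow> nat" where
  "leg \<nu> x = conj_part \<nu> (snd x) - fst x"

definition f_poly :: "nat list \<Rightarrow> 'a::comm_ring_1 \<Rightarrow> 'a \<Rightarrow> 'a" where
  "f_poly \<nu> q t = (\<Sum>x\<in>boxes \<nu>. q ^ arm \<nu> x * t ^ leg \<nu> x)"

definition complement :: "nat \<Rightarrow> nat \<Rightarrow> nat list \<Rightarrow> nat list" where
  "complement m n \<mu> = map (\<lambda>i. m - part \<mu> (n + 2 - i)) [1..<n+2]"

end

theory Submission imports Defs begin

lemma part_mono:
  assumes "is_partition \<nu>" "1 \<le> i" "i \<le> j"
  shows "part \<nu> j \<le> part \<nu> i"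
proof (cases "j \<le> length \<nu>")
  case False then show ?thesis by (simp add: part_def)
next
  case True
  show ?thesis
  proof (cases "i = j")
    case False
    with assms True have "\<nu> ! (j-1) \<le> \<nu> ! (i-1)"
      using assms(1) unfolding is_partition_def sorted_wrt_iff_nth_less by auto
    with assms True show ?thesis by (simp add: part_def)
  qed simp
qed

lemma part_pos:
  assumes "is_partition \<nu>" "1 \<le> i" "i \<le> length \<nu>"
  shows "0 < part \<nu> i"
  using assms unfolding is_partition_def part_def by (auto simp: nth_mem)

lemma conj_eq:
  assumes "is_partition \<nu>" "1 \<le> s" "s \<le> length \<nu>" "part \<nu> (Suc s) < c" "c \<le> part \<nu> s"
  shows "conj_part \<nu> c = s"
proof -
  have "{r. 1 \<le> r \<and> r \<le> length \<nu> \<and> c \<le> part \<nu> r} = {1..s}"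
  proof (intro set_eqI iffI)
    fix r assume "r \<in> {r. 1 \<le> r \<and> r \<le> length \<nu> \<and> c \<le> part \<nu> r}"
    hence r: "1 \<le> r" "c \<le> part \<nu> r" by auto
    have "r \<le> s"
    proof (rule ccontr)
      assume "\<not> r \<le> s"
      hence "part \<nu> r \<le> part \<nu> (Suc s)" using part_mono[OF assms(1), of "Suc s" r] by auto
      with r assms(4) show False by auto
    qed
    with r show "r \<in> {1..s}" by auto
  next
    fix r assume "r \<in> {1..s}"
    with part_mono[OF assms(1), of r s] assms show "r \<in> {r. 1 \<le> r \<and> r \<le> length \<nu> \<and> c \<le> part \<nu> r}"
      by auto
  qed
  thus ?thesis by (simp add: conj_part_def)
qed

lemma boxes_Sigma: "boxes \<nu> = Sigma {1..length \<nu>} (\<lambda>r. {0<..part \<nu> r})"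
  unfolding boxes_def by auto

lemma geom:
  fixes q :: "'a::comm_ring_1"
  assumes "b \<le> a" "a \<le> x"
  shows "(1-q) * (\<Sum>c\<in>{b<..a}. q^(x-c)) = q^(x-a) - q^(x-b)"
  using assms
proof (induction a)
  case 0 then show ?case by simp
next
  case (Suc a)
  show ?case
  proof (cases "b = Suc a")
    case True then show ?thesis by simp
  next
    case False
    hence b: "b \<le> a" using Suc by auto
    have e: "{b<..Suc a} = insert (Suc a) {b<..a}" using b by auto
    have "(1-q) * (\<Sum>c\<in>{b<..Suc a}. q^(x-c)) = (1-q) * q^(x - Suc a) + (1-q) * (\<Sum>c\<in>{b<..a}. q^(x-c))"
      by (simp add: e distrib_left)
    also have "\<dots> = (1-q) * q^(x - Suc a) + (q^(x-a) - q^(x-b))" using Suc b by simp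
    also have "q^(x-a) = q * q^(x - Suc a)" using Suc.prems
      by (metis Suc_diff_Suc Suc_le_lessD power_Suc)
    finally show ?thesis by (simp add: algebra_simps)
  qed
qed

lemma split_ivl:
  fixes p :: "nat \<Rightarrow> nat"
  assumes "i \<le> L" "\<And>j k. i \<le> j \<Longrightarrow> j \<le> k \<Longrightarrow> k \<le> Suc L \<Longrightarrow> p k \<le> p j"
  shows "(\<Sum>s=i..L. \<Sum>c\<in>{p (Suc s)<..p s}. F c) = (\<Sum>c\<in>{p (Suc L)<..p i}. F c)"
  using assms
proof (induction i rule: inc_induct)
  case base then show ?case by simp
next
  case (step i)
  have h: "\<And>j k. Suc i \<le> j \<Longrightarrow> j \<le> k \<Longrightarrow> k \<le> Suc L \<Longrightarrow> p k \<le> p j" using step.prems by auto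
  have e1: "{i..L} = insert i {Suc i..L}" using step.hyps by auto
  have m1: "p (Suc L) \<le> p (Suc i)" "p (Suc i) \<le> p i" using step.prems step.hyps by auto
  have e2: "{p (Suc L)<..p i} = {p (Suc i)<..p i} \<union> {p (Suc L)<..p (Suc i)}" using m1 by auto
  have "(\<Sum>c\<in>{p (Suc L)<..p i}. F c) = (\<Sum>c\<in>{p (Suc i)<..p i}. F c) + (\<Sum>c\<in>{p (Suc L)<..p (Suc i)}. F c)"
    unfolding e2 by (rule sum.union_disjoint) auto
  with step.IH[OF h] show ?case unfolding e1 by simp
qed


lemma row_lemma:
  fixes q t :: "'a::comm_ring_1"
  assumes P: "is_partition \<nu>" and r: "1 \<le> r" "r \<le> length \<nu>"
  shows "(1-q) * (\<Sum>c\<in>{0<..part \<nu> r}. q^(part \<nu> r - c) * t^(conj_part \<nu> c - r))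
     = (\<Sum>s=r..length \<nu>. t^(s-r) * (q^(part \<nu> r - part \<nu> s) - q^(part \<nu> r - part \<nu> (Suc s))))"
proof -
  let ?L = "length \<nu>" and ?p = "part \<nu>"
  have p0: "?p (Suc ?L) = 0" by (simp add: part_def)
  have "(\<Sum>c\<in>{0<..?p r}. q^(?p r - c) * t^(conj_part \<nu> c - r))
     = (\<Sum>s=r..?L. \<Sum>c\<in>{?p (Suc s)<..?p s}. q^(?p r - c) * t^(conj_part \<nu> c - r))"
    using split_ivl[of r ?L ?p "\<lambda>c. q^(?p r - c) * t^(conj_part \<nu> c - r)"] r p0
      part_mono[OF P] by auto
  also have "\<dots> = (\<Sum>s=r..?L. t^(s-r) * (\<Sum>c\<in>{?p (Suc s)<..?p s}. q^(?p r - c)))"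
  proof (rule sum.cong[OF refl])
    fix s assume s: "s \<in> {r..?L}"
    have "(\<Sum>c\<in>{?p (Suc s)<..?p s}. q^(?p r - c) * t^(conj_part \<nu> c - r))
        = (\<Sum>c\<in>{?p (Suc s)<..?p s}. t^(s-r) * q^(?p r - c))"
    proof (rule sum.cong[OF refl])
      fix c assume c: "c \<in> {?p (Suc s)<..?p s}"
      have "conj_part \<nu> c = s" using s r c by (intro conj_eq[OF P]) auto
      thus "q^(?p r - c) * t^(conj_part \<nu> c - r) = t^(s-r) * q^(?p r - c)" by (simp add: mult.commute)
    qed
    thus "(\<Sum>c\<in>{?p (Suc s)<..?p s}. q^(?p r - c) * t^(conj_part \<nu> c - r))
        = t^(s-r) * (\<Sum>c\<in>{?p (Suc s)<..?p s}. q^(?p r - c))"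
      by (simp add: sum_distrib_left)
  qed
  finally have "(1-q) * (\<Sum>c\<in>{0<..?p r}. q^(?p r - c) * t^(conj_part \<nu> c - r))
     = (\<Sum>s=r..?L. t^(s-r) * ((1-q) * (\<Sum>c\<in>{?p (Suc s)<..?p s}. q^(?p r - c))))"
    by (simp add: sum_distrib_left algebra_simps)
  also have "\<dots> = (\<Sum>s=r..?L. t^(s-r) * (q^(?p r - ?p s) - q^(?p r - ?p (Suc s))))"
  proof (rule sum.cong[OF refl])
    fix s assume s: "s \<in> {r..?L}"
    have "?p (Suc s) \<le> ?p s" "?p s \<le> ?p r" using s r part_mono[OF P] by auto
    thus "t^(s-r) * ((1-q) * (\<Sum>c\<in>{?p (Suc s)<..?p s}. q^(?p r - c))) =
          t^(s-r) * (q^(?p r - ?p s) - q^(?p r - ?p (Suc s)))" by (simp add: geom)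
  qed
  finally show ?thesis .
qed

lemma f_lemma:
  fixes q t :: "'a::comm_ring_1"
  assumes P: "is_partition \<nu>"
  shows "(1-q) * f_poly \<nu> q t = (\<Sum>r=1..length \<nu>. \<Sum>s=r..length \<nu>.
      t^(s-r) * (q^(part \<nu> r - part \<nu> s) - q^(part \<nu> r - part \<nu> (Suc s))))"
proof -
  have "f_poly \<nu> q t = (\<Sum>r=1..length \<nu>. \<Sum>c\<in>{0<..part \<nu> r}. q^(part \<nu> r - c) * t^(conj_part \<nu> c - r))"
    unfolding f_poly_def boxes_Sigma by (simp add: sum.Sigma arm_def leg_def split_def)
  hence "(1-q) * f_poly \<nu> q t = (\<Sum>r=1..length \<nu>. (1-q) * (\<Sum>c\<in>{0<..part \<nu> r}. q^(part \<nu> r - c) * t^(conj_part \<nu> c - r)))"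
    by (simp add: sum_distrib_left)
  also have "\<dots> = (\<Sum>r=1..length \<nu>. \<Sum>s=r..length \<nu>.
      t^(s-r) * (q^(part \<nu> r - part \<nu> s) - q^(part \<nu> r - part \<nu> (Suc s))))"
    by (rule sum.cong[OF refl]) (use row_lemma[OF P] in auto)
  finally show ?thesis .
qed

lemma sum_rev1: "(\<Sum>d<M. g d) = (\<Sum>r=1..M. g (M - r)) " for g :: "nat \<Rightarrow> 'a::comm_monoid_add"
  by (rule sum.reindex_bij_witness[where i="\<lambda>d. M - d" and j="\<lambda>r. M - r"]) auto

lemma A_step:
  fixes a :: "nat \<Rightarrow> nat \<Rightarrow> 'a::comm_ring_1"
  shows "(\<Sum>r=1..Suc N. \<Sum>s=r..Suc N. a r s) = (\<Sum>r=1..N. \<Sum>s=r..N. a r s) + (\<Sum>r=1..Suc N. a r (Suc N))"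
proof -
  have "(\<Sum>r=1..Suc N. \<Sum>s=r..Suc N. a r s) = (\<Sum>r=1..N. \<Sum>s=r..Suc N. a r s) + a (Suc N) (Suc N)"
    by simp
  also have "(\<Sum>r=1..N. \<Sum>s=r..Suc N. a r s) = (\<Sum>r=1..N. (\<Sum>s=r..N. a r s) + a r (Suc N))"
    by (rule sum.cong) auto
  finally show ?thesis by (simp add: sum.distrib)
qed

lemma tele:
  fixes E :: "nat \<Rightarrow> nat \<Rightarrow> 'a::comm_ring_1"
  shows "(\<Sum>r=1..N. \<Sum>s=r..N. t^(s-r) * (E r s - E r (Suc s)))
       - (\<Sum>b=1..N. \<Sum>a=1..b. t^(b-a) * (E a b - E (a-1) b))
       = (\<Sum>d<N. t^d * (E 0 (Suc d) - E (N-d) (Suc N)))"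
proof (induction N)
  case 0 then show ?case by simp
next
  case (Suc N)
  let ?M = "Suc N"
  have i1: "(\<Sum>r=1..?M. \<Sum>s=r..?M. t^(s-r) * (E r s - E r (Suc s))) = 
    (\<Sum>r=1..N. \<Sum>s=r..N. t^(s-r) * (E r s - E r (Suc s))) + (\<Sum>r=1..?M. t^(?M-r) * (E r ?M - E r (Suc ?M)))"
    by (rule A_step)
  have i2: "(\<Sum>b=1..?M. \<Sum>a=1..b. t^(b-a) * (E a b - E (a-1) b)) = 
    (\<Sum>b=1..N. \<Sum>a=1..b. t^(b-a) * (E a b - E (a-1) b)) + (\<Sum>a=1..?M. t^(?M-a) * (E a ?M - E (a-1) ?M))"
    by simp
  have r1: "(\<Sum>d<?M. t^d * E (?M-d) (Suc ?M)) = (\<Sum>r=1..?M. t^(?M-r) * E r (Suc ?M))"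
    by (subst sum_rev1) (rule sum.cong, auto)
  have r2: "(\<Sum>d<?M. t^d * E (N-d) ?M) = (\<Sum>r=1..?M. t^(?M-r) * E (r-1) ?M)"
    by (subst sum_rev1) (rule sum.cong, auto simp: Suc_diff_le)
  have r3: "(\<Sum>d<?M. t^d * E (N-d) ?M) = (\<Sum>d<N. t^d * E (N-d) ?M) + t^N * E 0 ?M" by simp
  have "(\<Sum>d<?M. t^d * (E 0 (Suc d) - E (?M-d) (Suc ?M))) =
     (\<Sum>d<N. t^d * E 0 (Suc d)) + t^N * E 0 ?M - (\<Sum>d<?M. t^d * E (?M-d) (Suc ?M))"
    by (simp add: sum_subtractf right_diff_distrib)
  also have "\<dots> = (\<Sum>d<N. t^d * (E 0 (Suc d) - E (N-d) ?M)) + (\<Sum>r=1..?M. t^(?M-r) * E (r-1) ?M)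
       - (\<Sum>r=1..?M. t^(?M-r) * E r (Suc ?M))"
    using r1 r2 r3 by (simp add: sum_subtractf right_diff_distrib algebra_simps)
  finally have R: "(\<Sum>d<?M. t^d * (E 0 (Suc d) - E (?M-d) (Suc ?M))) =
     (\<Sum>d<N. t^d * (E 0 (Suc d) - E (N-d) ?M)) + (\<Sum>r=1..?M. t^(?M-r) * E (r-1) ?M)
       - (\<Sum>r=1..?M. t^(?M-r) * E r (Suc ?M))" .
  show ?case unfolding i1 i2 R Suc.IH[symmetric]
    by (simp add: sum_subtractf right_diff_distrib sum.distrib algebra_simps)
qed


lemma dbl_rev:
  fixes g :: "nat \<Rightarrow> nat \<Rightarrow> 'a::comm_monoid_add"
  shows "(\<Sum>i=1..N. \<Sum>k=i..N. g i k) = (\<Sum>b=1..N. \<Sum>a=1..b. g (Suc N - b) (Suc N - a))"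
proof -
  have "(\<Sum>i=1..N. \<Sum>k=i..N. g i k) = (\<Sum>(i,k)\<in>Sigma {1..N} (\<lambda>i. {i..N}). g i k)"
    by (simp add: sum.Sigma)
  also have "\<dots> = (\<Sum>(b,a)\<in>Sigma {1..N} (\<lambda>b. {1..b}). g (Suc N - b) (Suc N - a))"
    by (rule sum.reindex_bij_witness[where i="\<lambda>(b,a). (Suc N - b, Suc N - a)" and j="\<lambda>(i,k). (Suc N - i, Suc N - k)"]) auto
  also have "\<dots> = (\<Sum>b=1..N. \<Sum>a=1..b. g (Suc N - b) (Suc N - a))"
    by (simp add: sum.Sigma)
  finally show ?thesis .
qed

lemma compl_len: "length (complement m n \<mu>) = n + 1"
  by (simp add: complement_def)

lemma compl_nth:
  assumes "k < n + 1"
  shows "complement m n \<mu> ! k = m - part \<mu> (n + 1 - k)"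
proof -
  have "complement m n \<mu> ! k = m - part \<mu> (n + 2 - ([1..<n+2] ! k))"
    unfolding complement_def using assms by (subst nth_map) (simp_all del: upt_Suc)
  also have "[1..<n+2] ! k = 1 + k" using assms by (simp del: upt_Suc)
  finally show ?thesis by simp
qed

lemma compl_part:
  assumes "1 \<le> i" "i \<le> n + 1"
  shows "part (complement m n \<mu>) i = m - part \<mu> (n + 2 - i)"
  using assms compl_nth[of "i - 1" n m \<mu>] by (simp add: part_def compl_len)

lemma compl_partition:
  assumes P: "is_partition \<mu>" and len: "length \<mu> = n + 1" and lt: "part \<mu> 1 < m"
  shows "is_partition (complement m n \<mu>)"
proof -
  have le: "part \<mu> j < m" for j
    using part_mono[OF P, of 1 j] lt by (cases "j = 0") (auto simp: part_def)
  have nth: "complement m n \<mu> ! k = m - part \<mu> (n + 1 - k)" if "k < n + 1" for k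
    using that by (rule compl_nth)
  show ?thesis unfolding is_partition_def
  proof
    show "sorted_wrt (\<ge>) (complement m n \<mu>)"
      unfolding sorted_wrt_iff_nth_less
    proof (intro allI impI)
      fix i j assume ij: "i < j" "j < length (complement m n \<mu>)"
      hence "part \<mu> (n + 1 - i) \<le> part \<mu> (n + 1 - j)"
        using part_mono[OF P, of "n + 1 - j" "n + 1 - i"] by (simp add: compl_len)
      thus "complement m n \<mu> ! j \<le> complement m n \<mu> ! i"
        using ij nth by (simp add: compl_len)
    qed
    show "\<forall>x\<in>set (complement m n \<mu>). 0 < x"
      using le by (auto simp: complement_def)
  qed
qed

theorem mainTheorem14:
  fixes m n :: nat and \<mu> :: "nat list" and q t :: "'a::field"
  assumes "m \<ge> 1" and "is_partition \<mu>" and "length \<mu> = n + 1"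
    and "part \<mu> 1 < m" and "q \<noteq> 1"
  shows "f_poly \<mu> q t - f_poly (complement m n \<mu>) q t =
    (1 / (1 - q)) * (\<Sum>j=0..n. t ^ j *
       (q ^ part (complement m n \<mu>) (n + 1 - j) - q ^ part \<mu> (n + 1 - j)))"
proof -
  note P = assms(2) and len = assms(3) and lt = assms(4)
  define N where "N = n + 1"
  define p where "p = part \<mu>"
  define pc where "pc = part (complement m n \<mu>)"
  define P0 where "P0 j = (if j = 0 then m else p j)" for j
  define E where "E a b = q ^ (P0 a - P0 b)" for a b
  have le: "p j < m" for j
    using part_mono[OF P, of 1 j] lt by (cases "j = 0") (auto simp: part_def p_def)
  have P0m: "P0 j \<le> m" for j using le[of j] by (simp add: P0_def)
  have P0mono: "P0 j' \<le> P0 j" if "j \<le> j'" for j j'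
    using that part_mono[OF P, of j j'] P0m[of j'] by (auto simp: P0_def p_def)
  have pN: "p (Suc N) = 0" by (simp add: p_def part_def len N_def)
  have PC: "is_partition (complement m n \<mu>)" by (rule compl_partition[OF P len lt])
  have A: "(1-q) * f_poly \<mu> q t = (\<Sum>r=1..N. \<Sum>s=r..N. t^(s-r) * (E r s - E r (Suc s)))"
    unfolding f_lemma[OF P] len N_def[symmetric]
    by (intro sum.cong refl) (auto simp: E_def P0_def p_def)
  have pcE: "pc i = m - P0 (Suc N - i)" if "1 \<le> i" "i \<le> Suc N" for i
  proof (cases "i = Suc N")
    case True thus ?thesis by (simp add: pc_def part_def compl_len N_def P0_def)
  next
    case False thus ?thesis using that compl_part[of i n m \<mu>]
      by (simp add: pc_def P0_def p_def N_def)
  qed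
  have "(1-q) * f_poly (complement m n \<mu>) q t = (\<Sum>i=1..N. \<Sum>k=i..N. t^(k-i) * (q^(pc i - pc k) - q^(pc i - pc (Suc k))))"
    unfolding f_lemma[OF PC] compl_len N_def pc_def ..
  also have "\<dots> = (\<Sum>i=1..N. \<Sum>k=i..N. t^(k-i) * (E (Suc N - k) (Suc N - i) - E (N - k) (Suc N - i)))"
  proof (intro sum.cong refl)
    fix i k assume i: "i \<in> {1..N}" and k: "k \<in> {i..N}"
    have pci: "pc i = m - P0 (Suc N - i)" using i by (intro pcE) auto
    have pck: "pc k = m - P0 (Suc N - k)" using i k by (intro pcE) auto
    have pck1: "pc (Suc k) = m - P0 (N - k)" using i k pcE[of "Suc k"] by auto
    have m1: "P0 (Suc N - i) \<le> P0 (Suc N - k)" using i k by (intro P0mono) auto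
    have m2: "P0 (Suc N - i) \<le> P0 (N - k)" using i k by (intro P0mono) auto
    have "pc i - pc k = P0 (Suc N - k) - P0 (Suc N - i)"
      using pci pck m1 P0m[of "Suc N - k"] by arith
    moreover have "pc i - pc (Suc k) = P0 (N - k) - P0 (Suc N - i)"
      using pci pck1 m2 P0m[of "N - k"] by arith
    ultimately show "t^(k-i) * (q^(pc i - pc k) - q^(pc i - pc (Suc k))) =
      t^(k-i) * (E (Suc N - k) (Suc N - i) - E (N - k) (Suc N - i))" by (simp add: E_def)
  qed
  also have "\<dots> = (\<Sum>b=1..N. \<Sum>a=1..b. t^(b-a) * (E a b - E (a-1) b))"
    unfolding dbl_rev by (intro sum.cong refl) (auto simp: Suc_diff_le)
  finally have B: "(1-q) * f_poly (complement m n \<mu>) q t = (\<Sum>b=1..N. \<Sum>a=1..b. t^(b-a) * (E a b - E (a-1) b))" .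
  have D: "(1-q) * (f_poly \<mu> q t - f_poly (complement m n \<mu>) q t) = (\<Sum>d<N. t^d * (E 0 (Suc d) - E (N-d) (Suc N)))"
    unfolding right_diff_distrib[of "1-q"] A B by (rule tele)
  also have "\<dots> = (\<Sum>j=0..n. t ^ j *
       (q ^ part (complement m n \<mu>) (n + 1 - j) - q ^ part \<mu> (n + 1 - j)))"
  proof -
    have "{..<N} = {0..n}" by (auto simp: N_def)
    moreover have "t^j * (E 0 (Suc j) - E (N-j) (Suc N)) = t ^ j *
       (q ^ part (complement m n \<mu>) (n + 1 - j) - q ^ part \<mu> (n + 1 - j))" if "j \<in> {0..n}" for j
    proof -
      have j: "j \<le> n" using that by simp
      have c: "part (complement m n \<mu>) (n + 1 - j) = m - part \<mu> (Suc j)"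
        using j compl_part[of "n + 1 - j" n m \<mu>] by (simp add: Suc_diff_le)
      have e1: "E 0 (Suc j) = q ^ part (complement m n \<mu>) (n + 1 - j)"
        unfolding c E_def P0_def p_def by simp
      have e2: "E (N-j) (Suc N) = q ^ part \<mu> (n + 1 - j)"
        using j pN unfolding E_def P0_def p_def N_def by simp
      show ?thesis by (simp only: e1 e2)
    qed
    ultimately show ?thesis by (intro sum.cong) auto
  qed
  finally have F: "(1-q) * (f_poly \<mu> q t - f_poly (complement m n \<mu>) q t) = (\<Sum>j=0..n. t ^ j *
       (q ^ part (complement m n \<mu>) (n + 1 - j) - q ^ part \<mu> (n + 1 - j)))" .
  have nz: "1 - q \<noteq> 0" using assms(5) by simp
  have "f_poly \<mu> q t - f_poly (complement m n \<mu>) q t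
      = (1 / (1 - q)) * ((1-q) * (f_poly \<mu> q t - f_poly (complement m n \<mu>) q t))"
    using nz by simp
  thus ?thesis unfolding F .
qed

end
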